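(* Let $\mathbb{F}\subset\mathbb{C}$ be a field, $k\in\mathbb{N}$ with $k\ge2$, and $P\in\mathbb{Q}[x]$ a polynomial of degree $k$ with derivative $P'$. If an additive function $a\colon\mathbb{F}\to\mathbb{C}$ satisfies \[ a(P(x))=P'(x)\,a(x)\qquad(x\in\mathbb{F}), \] then $a$ is a derivation, i.e. $a(xy)=x\,a(y)+a(x)\,y$ for all $x,y\in\mathbb{F}$.
   Context: A function $a\colon\mathbb{F}\to\mathbb{C}$ is additive if $a(x+y)=a(x)+a(y)$ for all $x,y\in\mathbb{F}$; a derivation is an additive function satisfying the Leibniz rule $a(xy)=x\,a(y)+a(x)\,y$. *)

theory Defs
  imports Complex_Main "HOL-Computational_Algebra.Polynomial"
begin

definition complex_subfield :: "complex set \<Rightarrow> bool" where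
  "complex_subfield F \<longleftrightarrow>
     0 \<in> F \<and> 1 \<in> F \<and>
     (\<forall>x\<in>F. \<forall>y\<in>F. x + y \<in> F) \<and>
     (\<forall>x\<in>F. - x \<in> F) \<and>
     (\<forall>x\<in>F. \<forall>y\<in>F. x * y \<in> F) \<and>
     (\<forall>x\<in>F. x \<noteq> 0 \<longrightarrow> inverse x \<in> F)"

definition additive_on :: "complex set \<Rightarrow> (complex \<Rightarrow> complex) \<Rightarrow> bool" where
  "additive_on F a \<longleftrightarrow> (\<forall>x\<in>F. \<forall>y\<in>F. a (x + y) = a x + a y)"

definition derivation_on :: "complex set \<Rightarrow> (complex \<Rightarrow> complex) \<Rightarrow> bool" where
  "derivation_on F a \<longleftrightarrow> additive_on F a \<and>
     (\<forall>x\<in>F. \<forall>y\<in>F. a (x * y) = x * a y + a x * y)"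

end

theory Submission
  imports Defs
begin

lemma poly_sum_bound:
  fixes p :: "'a::comm_ring_1 poly"
  assumes "degree p \<le> n"
  shows "poly p x = (\<Sum>i\<le>n. coeff p i * x^i)"
proof -
  have "poly p x = poly (\<Sum>i\<le>n. monom (coeff p i) i) x"
    using poly_as_sum_of_monoms'[OF assms] by simp
  then show ?thesis by (simp add: poly_sum poly_monom)
qed

lemma rat_poly_eq:
  fixes A B :: "complex poly"
  assumes "\<And>q::rat. poly A (of_rat q) = poly B (of_rat q)"
  shows "A = B"
proof (rule ccontr)
  assume "A \<noteq> B" then have "A - B \<noteq> 0" by simp
  then have f: "finite {z. poly (A-B) z = 0}" by (rule poly_roots_finite)
  have s: "range (of_rat :: rat \<Rightarrow> complex) \<subseteq> {z. poly (A-B) z = 0}" using assms by auto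
  have "inj (of_rat :: rat \<Rightarrow> complex)" by (auto simp: inj_on_def)
  then have "infinite (range (of_rat :: rat \<Rightarrow> complex))"
    by (metis finite_imageD infinite_UNIV_char_0)
  then show False using f s finite_subset by blast
qed

lemma coeff_monom_sum:
  "coeff (\<Sum>j\<in>I. monom (f j) (g j)) n = (\<Sum>j\<in>I. if g j = n then f j else 0)"
  by (simp add: coeff_sum coeff_monom)

theorem mainTheorem5:
  fixes F :: "complex set" and k :: nat and P :: "rat poly" and a :: "complex \<Rightarrow> complex"
  assumes "complex_subfield F"
    and "k \<ge> 2"
    and "degree P = k"
    and "additive_on F a"
    and "\<forall>x\<in>F. a (poly (map_poly of_rat P) x) = poly (map_poly of_rat (pderiv P)) x * a x"
  shows "derivation_on F a"
proof -
  note sf = assms(1)[unfolded complex_subfield_def]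
  have F0: "0 \<in> F" and F1: "1 \<in> F" using sf by auto
  have Fadd: "\<And>x y. x \<in> F \<Longrightarrow> y \<in> F \<Longrightarrow> x + y \<in> F" using sf by auto
  have Fneg: "\<And>x. x \<in> F \<Longrightarrow> - x \<in> F" using sf by auto
  have Fmul: "\<And>x y. x \<in> F \<Longrightarrow> y \<in> F \<Longrightarrow> x * y \<in> F" using sf by auto
  have Finv: "\<And>x. x \<in> F \<Longrightarrow> x \<noteq> 0 \<Longrightarrow> inverse x \<in> F" using sf by auto
  have add: "\<And>x y. x \<in> F \<Longrightarrow> y \<in> F \<Longrightarrow> a (x + y) = a x + a y"
    using assms(4) unfolding additive_on_def by auto
  have a0: "a 0 = 0" using add[OF F0 F0] by simp
  have aneg: "a (- x) = - a x" if "x \<in> F" for x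
  proof -
    have "a x + a (- x) = 0" using add[OF that Fneg[OF that]] a0 by simp
    then show ?thesis by (simp add: add_eq_0_iff)
  qed
  have natF: "of_nat n \<in> F" for n
    by (induction n) (auto simp: F0 intro!: Fadd F1)
  have intF: "of_int m \<in> F" for m
  proof (cases "m \<ge> 0")
    case True then show ?thesis using natF[of "nat m"] by simp
  next
    case False then show ?thesis using Fneg[OF natF[of "nat (-m)"]] by simp
  qed
  have ratF: "of_rat q \<in> F" for q
  proof -
    have "(of_rat q :: complex) \<in> \<rat>" by (rule Rats_of_rat)
    then obtain m n where "n > 0" and eq: "(of_rat q :: complex) = of_int m / of_int n"
      by (rule Rats_cases')
    then have "(of_int n :: complex) \<noteq> 0" by simp
    then show ?thesis unfolding eq divide_inverse using Fmul[OF intF Finv[OF intF]] by blast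
  qed
  have anat: "a (of_nat n * y) = of_nat n * a y" if "y \<in> F" for n y
  proof (induction n)
    case 0 then show ?case using a0 by simp
  next
    case (Suc n)
    have "a (of_nat (Suc n) * y) = a (of_nat n * y + y)" by (simp add: algebra_simps)
    also have "\<dots> = a (of_nat n * y) + a y" by (rule add[OF Fmul[OF natF that] that])
    finally show ?case using Suc by (simp add: algebra_simps)
  qed
  have aint: "a (of_int m * y) = of_int m * a y" if "y \<in> F" for m y
  proof (cases "m \<ge> 0")
    case True then show ?thesis using anat[OF that, of "nat m"] by simp
  next
    case False
    have "a (of_int m * y) = a (- (of_nat (nat (-m)) * y))" using False by simp
    also have "\<dots> = - (of_nat (nat (-m)) * a y)"
      using aneg[OF Fmul[OF natF that]] anat[OF that] by simp
    finally show ?thesis using False by simp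
  qed
  have hom: "a (of_rat q * y) = of_rat q * a y" if "y \<in> F" for q y
  proof -
    have "(of_rat q :: complex) \<in> \<rat>" by (rule Rats_of_rat)
    then obtain m n where "n > 0" and eq: "(of_rat q :: complex) = of_int m / of_int n"
      by (rule Rats_cases')
    then have nz: "(of_int n :: complex) \<noteq> 0" by simp
    define z where "z = of_rat q * y"
    have zF: "z \<in> F" unfolding z_def by (rule Fmul[OF ratF that])
    have "of_int n * z = of_int m * y" unfolding z_def eq using nz by simp
    then have "of_int n * a z = of_int m * a y" using aint[OF zF] aint[OF that] by metis
    then have "a z = of_int m / of_int n * a y" using nz by (simp add: field_simps)
    then show ?thesis unfolding z_def eq .
  qed
  have powF: "x ^ n \<in> F" if "x \<in> F" for x n
    by (induction n) (auto simp: F1 intro!: Fmul that)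
  have asum: "(\<forall>i\<in>I. f i \<in> F) \<longrightarrow> sum f I \<in> F \<and> a (sum f I) = (\<Sum>i\<in>I. a (f i))"
    if "finite I" for I and f :: "nat \<Rightarrow> complex"
    using that by (induction I rule: finite_induct) (auto simp: F0 a0 add Fadd)
  have Pnz: "P \<noteq> 0" using assms(2,3) by auto
  have ck: "coeff P k \<noteq> 0" using Pnz assms(3) leading_coeff_0_iff by metis

  have degp: "degree (map_poly (of_rat :: rat \<Rightarrow> complex) P) \<le> k"
    using map_poly_degree_leq assms(3) by metis
  have degd: "degree (map_poly (of_rat :: rat \<Rightarrow> complex) (pderiv P)) \<le> k - 1"
    using map_poly_degree_leq[of of_rat "pderiv P"] degree_pderiv[of P] assms(3) by simp
  have powk: "a (x ^ k) = of_nat k * x ^ (k - 1) * a x" if xF: "x \<in> F" for x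
  proof -
    define S1 where "S1 = (\<Sum>i\<le>k. monom (of_rat (coeff P i) * a (x ^ i)) i)"
    define S2 where "S2 = (\<Sum>n\<le>k-1. monom (of_rat (of_nat (Suc n) * coeff P (Suc n)) * x ^ n * a x) (Suc n))"
    have "poly S1 (of_rat q) = poly S2 (of_rat q)" for q
    proof -
      define z :: complex where "z = of_rat q"
      define y where "y = z * x"
      have yF: "y \<in> F" unfolding y_def z_def by (rule Fmul[OF ratF xF])
      have e1: "poly (map_poly of_rat P) y = (\<Sum>i\<le>k. of_rat (coeff P i * q ^ i) * x ^ i)"
        by (simp add: poly_sum_bound[OF degp] coeff_map_poly y_def z_def power_mult_distrib
              of_rat_mult of_rat_power mult.assoc)
      have "a (poly (map_poly of_rat P) y) = (\<Sum>i\<le>k. a (of_rat (coeff P i * q ^ i) * x ^ i))"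
        unfolding e1 using asum[of "{..k}" "\<lambda>i. of_rat (coeff P i * q ^ i) * x ^ i"]
          Fmul[OF ratF powF[OF xF]] by auto
      also have "\<dots> = poly S1 z"
        unfolding S1_def poly_sum poly_monom hom[OF powF[OF xF]]
        by (simp add: of_rat_mult of_rat_power z_def algebra_simps)
      finally have L: "a (poly (map_poly of_rat P) y) = poly S1 z" .
      have "poly (map_poly of_rat (pderiv P)) y * a y =
         (\<Sum>n\<le>k-1. of_rat (of_nat (Suc n) * coeff P (Suc n)) * y ^ n) * (z * a x)"
        by (simp add: poly_sum_bound[OF degd] coeff_map_poly coeff_pderiv y_def hom[OF xF] z_def)
      also have "\<dots> = poly S2 z"
        by (simp add: S2_def poly_sum poly_monom sum_distrib_right sum_distrib_left y_def power_mult_distrib algebra_simps)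
      finally have R: "poly (map_poly of_rat (pderiv P)) y * a y = poly S2 z" .
      show ?thesis using L R assms(5) yF z_def by auto
    qed
    then have "S1 = S2" by (rule rat_poly_eq)
    then have "coeff S1 k = coeff S2 k" by simp
    moreover have "coeff S1 k = of_rat (coeff P k) * a (x ^ k)"
      unfolding S1_def coeff_monom_sum by (simp add: eq_commute[of _ k])
    moreover have "coeff S2 k = of_rat (of_nat k * coeff P k) * x ^ (k - 1) * a x"
    proof -
      have "\<And>n. n \<in> {..k-1} \<Longrightarrow> (Suc n = k) = (n = k - 1)" using assms(2) by auto
      then have "coeff S2 k = (\<Sum>n\<le>k-1. if n = k - 1 then
          of_rat (of_nat (Suc n) * coeff P (Suc n)) * x ^ n * a x else 0)"
        unfolding S2_def coeff_monom_sum by (intro sum.cong) auto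
      also have "\<dots> = of_rat (of_nat k * coeff P k) * x ^ (k - 1) * a x"
        using assms(2) by (simp add: sum.delta)
      finally show ?thesis .
    qed
    ultimately show ?thesis using ck by (simp add: of_rat_mult)
  qed
  have a1: "a 1 = 0"
  proof -
    have "a 1 = of_nat k * a 1" using powk[OF F1] by simp
    then have "(of_nat k - 1) * a 1 = 0" by (simp add: algebra_simps)
    moreover have "(of_nat k - 1 :: complex) \<noteq> 0" using assms(2) by simp
    ultimately show ?thesis by simp
  qed
  have arat: "a (of_rat r) = 0" for r using hom[OF F1, of r] a1 by simp
  have sq: "a (x ^ 2) = 2 * x * a x" if xF: "x \<in> F" for x
  proof -
    define L where "L = (\<Sum>j\<le>k. monom (of_nat (k choose j) * a (x ^ j)) (k - j))"
    define R where "R = (\<Sum>j\<le>k-1. monom (of_nat k * of_nat ((k - 1) choose j) * x ^ j * a x) (k - 1 - j))"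
    have "poly L (of_rat q) = poly R (of_rat q)" for q
    proof -
      define z :: complex where "z = of_rat q"
      define w where "w = x + z"
      have wF: "w \<in> F" unfolding w_def z_def by (rule Fadd[OF xF ratF])
      have aw: "a w = a x" unfolding w_def z_def using add[OF xF ratF] arat by simp
      have "a (w ^ k) = a (\<Sum>j\<le>k. of_rat (of_nat (k choose j) * q ^ (k - j)) * x ^ j)"
        unfolding w_def binomial_ring
        by (intro arg_cong[where f=a] sum.cong) (auto simp: z_def of_rat_mult of_rat_power)
      also have "\<dots> = (\<Sum>j\<le>k. a (of_rat (of_nat (k choose j) * q ^ (k - j)) * x ^ j))"
        using asum[of "{..k}" "\<lambda>j. of_rat (of_nat (k choose j) * q ^ (k - j)) * x ^ j"]
          Fmul[OF ratF powF[OF xF]] by auto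
      also have "\<dots> = poly L z"
        unfolding L_def poly_sum poly_monom hom[OF powF[OF xF]]
        by (simp add: of_rat_mult of_rat_power z_def algebra_simps)
      finally have e1: "a (w ^ k) = poly L z" .
      have "of_nat k * w ^ (k - 1) * a w =
          of_nat k * (\<Sum>j\<le>k-1. of_nat ((k-1) choose j) * x ^ j * z ^ (k - 1 - j)) * a x"
        by (subst aw) (simp only: w_def binomial_ring)
      also have "\<dots> = poly R z"
        by (simp add: R_def poly_sum poly_monom sum_distrib_right sum_distrib_left algebra_simps)
      finally have e2: "of_nat k * w ^ (k - 1) * a w = poly R z" .
      show ?thesis using powk[OF wF] e1 e2 z_def by simp
    qed
    then have "L = R" by (rule rat_poly_eq)
    then have "coeff L (k - 2) = coeff R (k - 2)" by simp
    moreover have "coeff L (k - 2) = of_nat (k choose 2) * a (x ^ 2)"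
    proof -
      have "\<And>j. j \<in> {..k} \<Longrightarrow> (k - j = k - 2) = (j = 2)" using assms(2) by auto
      then have "coeff L (k - 2) = (\<Sum>j\<le>k. if j = 2 then of_nat (k choose j) * a (x ^ j) else 0)"
        unfolding L_def coeff_monom_sum by (intro sum.cong) auto
      also have "\<dots> = of_nat (k choose 2) * a (x ^ 2)" using assms(2) by (simp add: sum.delta)
      finally show ?thesis .
    qed
    moreover have "coeff R (k - 2) = of_nat k * of_nat (k - 1) * x * a x"
    proof -
      have "\<And>j. j \<in> {..k-1} \<Longrightarrow> (k - 1 - j = k - 2) = (j = 1)" using assms(2) by auto
      then have "coeff R (k - 2) = (\<Sum>j\<le>k-1. if j = 1 then
           of_nat k * of_nat ((k - 1) choose j) * x ^ j * a x else 0)"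
        unfolding R_def coeff_monom_sum by (intro sum.cong) auto
      also have "\<dots> = of_nat k * of_nat (k - 1) * x * a x" using assms(2) by (simp add: sum.delta)
      finally show ?thesis .
    qed
    moreover have "2 * (k choose 2) = k * (k - 1)"
    proof -
      have "even (k * (k - 1))" using assms(2) by (cases "even k") auto
      then show ?thesis by (simp add: choose_two)
    qed
    moreover have "(of_nat k * of_nat (k - 1) :: complex) \<noteq> 0" using assms(2) by simp
    ultimately have c1: "of_nat (k choose 2) * a (x ^ 2) = of_nat k * of_nat (k - 1) * x * a x"
      and c2: "2 * (k choose 2) = k * (k - 1)"
      and nz: "(of_nat k * of_nat (k - 1) :: complex) \<noteq> 0" by auto
    have c3: "(2 :: complex) * of_nat (k choose 2) = of_nat k * of_nat (k - 1)"
      using arg_cong[OF c2, of "of_nat :: nat \<Rightarrow> complex"] by simp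
    have "of_nat k * of_nat (k - 1) * a (x ^ 2) = of_nat k * of_nat (k - 1) * (2 * x * a x)"
    proof -
      have "of_nat k * of_nat (k - 1) * a (x ^ 2) = 2 * (of_nat (k choose 2) * a (x ^ 2))"
        using c3 by (simp add: mult.assoc)
      also have "\<dots> = of_nat k * of_nat (k - 1) * (2 * x * a x)" using c1 by simp
      finally show ?thesis .
    qed
    then show ?thesis using nz by simp
  qed
  have leib: "a (x * y) = x * a y + a x * y" if xF: "x \<in> F" and yF: "y \<in> F" for x y
  proof -
    have xyF: "x * y \<in> F" by (rule Fmul[OF xF yF])
    have "(x + y) ^ 2 = x ^ 2 + (x * y + x * y) + y ^ 2" by (simp add: power2_eq_square algebra_simps)
    then have "a ((x + y) ^ 2) = a (x ^ 2) + (a (x * y) + a (x * y)) + a (y ^ 2)"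
      using add powF xF yF xyF Fadd by metis
    moreover have "a ((x + y) ^ 2) = 2 * (x + y) * (a x + a y)" using sq[OF Fadd[OF xF yF]] add[OF xF yF] by simp
    ultimately have "2 * a (x * y) = 2 * (x * a y + a x * y)"
      using sq[OF xF] sq[OF yF] by (simp add: algebra_simps)
    then show ?thesis by (metis mult_cancel_left zero_neq_numeral)
  qed
  show ?thesis unfolding derivation_on_def using assms(4) leib by blast
qed

end
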